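(* Let $\mathcal V\cong\mathbb R^d$ be a finite-dimensional real normed space, $\mathcal X\subseteq\mathcal V$ convex, and $f:\mathcal V\to\mathbb R\cup\{+\infty\}$ proper, lower semicontinuous and convex with $\operatorname{dom} f=\mathcal X$ and nonempty solution set. Let $h$ be a Bregman function on $\mathcal X$ and suppose $f$ is relatively continuous with constant $G$. Then the Bregman residuals $\delta_t$ of AdaMir run with perfect (sub)gradients satisfy $\delta_t^2\le2G^2$ for all $t\ge1$.
   Context: $\mathcal V^*$ denotes the dual space with pairing $\langle\cdot,\cdot\rangle$. For $x\in\operatorname{dom}\partial f$, $\nabla f(x)$ denotes a fixed selection of $\partial f(x)$. A Bregman function on $\mathcal X$ is a convex lower semicontinuous $h:\mathcal V\to\mathbb R\cup\{+\infty\}$ with $\operatorname{dom}\partial h\subseteq\mathcal X\subseteq\operatorname{dom}h$, whose subdifferential admits a continuous selection $\nabla h(x)\in\partial h(x)$ on $\operatorname{dom}\partial h$, and which is $K$-strongly convex for some $K>0$: $h(x')\ge h(x)+\langle\nabla h(x),x'-x\rangle+\frac K2\|x'-x\|^2$ for all $x,x'\in\operatorname{dom}\partial h$. Bregman divergence: $D(p,x)=h(p)-h(x)-\langle\nabla h(x),p-x\rangle$; prox-mapping: $P_x(y)=\arg\min_{x'\in\mathcal X}\{\langle y,x-x'\rangle+D(x',x)\}$ for $x\in\operatorname{dom}\partial h$, $y\in\mathcal V^*$. AdaMir with perfect gradients: pick $x_0\neq x_1$ in $\operatorname{dom}\partial h$, $\delta_0=[D(x_0,x_1)+D(x_1,x_0)]^{1/2}$.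 For $t=1,2,\dots$: $\gamma_t=\big(\sum_{s=0}^{t-1}\delta_s^2\big)^{-1/2}$, $x_{t+1}=P_{x_t}(-\gamma_t\nabla f(x_t))$, $\delta_t=[D(x_t,x_{t+1})+D(x_{t+1},x_t)]^{1/2}/\gamma_t$. $f$ is relatively continuous with constant $G>0$ if $f(x)-f(x')\le\langle\nabla f(x),x-x'\rangle\le G\sqrt{2D(x',x)}$ for all $x\in\operatorname{dom}\partial h$, $x'\in\operatorname{dom}h$. *)

theory Defs
  imports "HOL-Analysis.Analysis"
begin

text \<open>The finite-dimensional space V is modelled by a type of class euclidean_space;
  its dual V* is identified with V via the inner product, so the pairing
  between a dual vector y and a primal vector x is the inner product y \<bullet> x.
  The norm of V is an arbitrary norm function nrm (not necessarily the Euclidean one).\<close>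

definition is_norm :: "('a::real_vector \<Rightarrow> real) \<Rightarrow> bool" where
  "is_norm N \<longleftrightarrow> (\<forall>x. N x \<ge> 0) \<and> (\<forall>x. N x = 0 \<longleftrightarrow> x = 0) \<and>
     (\<forall>c x. N (c *\<^sub>R x) = \<bar>c\<bar> * N x) \<and> (\<forall>x y. N (x + y) \<le> N x + N y)"

definition edom :: "('a \<Rightarrow> ereal) \<Rightarrow> 'a set" where
  "edom f = {x. f x < \<infinity>}"

definition proper_fun :: "('a \<Rightarrow> ereal) \<Rightarrow> bool" where
  "proper_fun f \<longleftrightarrow> (\<forall>x. f x \<noteq> -\<infinity>) \<and> edom f \<noteq> {}"

definition lsc_fun :: "('a::topological_space \<Rightarrow> ereal) \<Rightarrow> bool" where
  "lsc_fun f \<longleftrightarrow> (\<forall>a. closed {x. f x \<le> a})"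

definition convex_fun :: "('a::real_vector \<Rightarrow> ereal) \<Rightarrow> bool" where
  "convex_fun f \<longleftrightarrow> (\<forall>x y t. 0 < t \<and> t < 1 \<longrightarrow>
      f ((1 - t) *\<^sub>R x + t *\<^sub>R y) \<le> ereal (1 - t) * f x + ereal t * f y)"

definition subdiff :: "('a::real_inner \<Rightarrow> ereal) \<Rightarrow> 'a \<Rightarrow> 'a set" where
  "subdiff f x = {g. f x < \<infinity> \<and> (\<forall>x'. f x' \<ge> f x + ereal (g \<bullet> (x' - x)))}"

definition dom_subdiff :: "('a::real_inner \<Rightarrow> ereal) \<Rightarrow> 'a set" where
  "dom_subdiff f = {x. subdiff f x \<noteq> {}}"

definition bregman_function ::
  "('a::real_inner \<Rightarrow> real) \<Rightarrow> 'a set \<Rightarrow> ('a \<Rightarrow> ereal) \<Rightarrow> ('a \<Rightarrow> 'a) \<Rightarrow> bool" where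
  "bregman_function N X h gh \<longleftrightarrow>
     convex_fun h \<and> lsc_fun h \<and> (\<forall>x. h x \<noteq> -\<infinity>) \<and>
     dom_subdiff h \<subseteq> X \<and> X \<subseteq> edom h \<and>
     (\<forall>x\<in>dom_subdiff h. gh x \<in> subdiff h x) \<and>
     continuous_on (dom_subdiff h) gh \<and>
     (\<exists>K>0. \<forall>x\<in>dom_subdiff h. \<forall>x'\<in>dom_subdiff h.
        h x' \<ge> h x + ereal (gh x \<bullet> (x' - x)) + ereal (K / 2 * (N (x' - x))\<^sup>2))"

definition breg :: "('a::real_inner \<Rightarrow> ereal) \<Rightarrow> ('a \<Rightarrow> 'a) \<Rightarrow> 'a \<Rightarrow> 'a \<Rightarrow> ereal" where
  "breg h gh p x = h p - h x - ereal (gh x \<bullet> (p - x))"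

definition prox :: "'a set \<Rightarrow> ('a::real_inner \<Rightarrow> ereal) \<Rightarrow> ('a \<Rightarrow> 'a) \<Rightarrow> 'a \<Rightarrow> 'a \<Rightarrow> 'a" where
  "prox X h gh x y = (SOME x'. x' \<in> X \<and>
      (\<forall>z\<in>X. ereal (y \<bullet> (x - x')) + breg h gh x' x \<le> ereal (y \<bullet> (x - z)) + breg h gh z x))"

definition rel_continuous ::
  "('a::real_inner \<Rightarrow> ereal) \<Rightarrow> ('a \<Rightarrow> 'a) \<Rightarrow> ('a \<Rightarrow> ereal) \<Rightarrow> ('a \<Rightarrow> 'a) \<Rightarrow> real \<Rightarrow> bool" where
  "rel_continuous f gf h gh G \<longleftrightarrow>
     (\<forall>x\<in>dom_subdiff h. \<forall>x'\<in>edom h.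
        f x - f x' \<le> ereal (gf x \<bullet> (x - x')) \<and>
        gf x \<bullet> (x - x') \<le> G * sqrt (2 * real_of_ereal (breg h gh x' x)))"

end

theory Submission
  imports Defs
begin


lemma norm_sum_le:
  assumes "is_norm N" "finite S"
  shows "N (sum f S) \<le> (\<Sum>i\<in>S. N (f i))"
  using assms(2)
proof (induction S rule: finite_induct)
  case empty
  have "N 0 = 0" using assms(1) unfolding is_norm_def by blast
  then show ?case by simp
next
  case (insert a S)
  have "N (f a + sum f S) \<le> N (f a) + N (sum f S)" using assms(1) unfolding is_norm_def by blast
  then show ?case using insert by simp
qed

lemma norm_upper:
  fixes N :: "'a::euclidean_space \<Rightarrow> real"
  assumes "is_norm N"
  shows "N v \<le> (\<Sum>b\<in>Basis. N b) * norm v"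
proof -
  have "N v = N (\<Sum>b\<in>Basis. (v \<bullet> b) *\<^sub>R b)" by (simp add: euclidean_representation)
  also have "\<dots> \<le> (\<Sum>b\<in>Basis. N ((v \<bullet> b) *\<^sub>R b))" by (rule norm_sum_le[OF assms]) simp
  also have "\<dots> = (\<Sum>b\<in>Basis. \<bar>v \<bullet> b\<bar> * N b)" using assms unfolding is_norm_def by simp
  also have "\<dots> \<le> (\<Sum>b\<in>Basis. norm v * N b)"
    apply (rule sum_mono)
    apply (rule mult_right_mono)
    using Basis_le_norm assms unfolding is_norm_def by auto
  also have "\<dots> = (\<Sum>b\<in>Basis. N b) * norm v" by (simp add: sum_distrib_left mult.commute)
  finally show ?thesis .
qed

lemma norm_minus_N:
  assumes "is_norm N"
  shows "N (u - v) = N (v - u)"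
proof -
  have "N (u - v) = N ((-1) *\<^sub>R (v - u))" by simp
  also have "\<dots> = \<bar>-1\<bar> * N (v - u)" using assms unfolding is_norm_def by blast
  also have "\<dots> = N (v - u)" by simp
  finally show ?thesis .
qed

lemma norm_cont:
  fixes N :: "'a::euclidean_space \<Rightarrow> real"
  assumes "is_norm N"
  shows "continuous_on S N"
proof -
  define C where "C = (\<Sum>b\<in>Basis. N b)"
  have C0: "C \<ge> 0" unfolding C_def using assms unfolding is_norm_def by (simp add: sum_nonneg)
  have lip: "\<bar>N u - N v\<bar> \<le> C * norm (u - v)" for u v
  proof -
    have "N u \<le> N (u - v) + N v" using assms unfolding is_norm_def
      by (metis diff_add_cancel)
    moreover have "N v \<le> N (v - u) + N u" using assms unfolding is_norm_def
      by (metis diff_add_cancel)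
    moreover have "N (u - v) \<le> C * norm (u - v)" unfolding C_def by (rule norm_upper[OF assms])
    moreover have "N (v - u) = N (u - v)" by (rule norm_minus_N[OF assms])
    ultimately show ?thesis by linarith
  qed
  show ?thesis unfolding continuous_on_iff
  proof (intro ballI allI impI)
    fix x e assume "x \<in> S" "(e::real) > 0"
    show "\<exists>d>0. \<forall>x'\<in>S. dist x' x < d \<longrightarrow> dist (N x') (N x) < e"
    proof (intro exI[of _ "e / (C + 1)"] conjI ballI impI)
      show "e / (C + 1) > 0" using \<open>e > 0\<close> C0 by simp
      fix x' assume "dist x' x < e / (C + 1)"
      hence "norm (x' - x) * (C + 1) < e" using C0 by (simp add: dist_norm field_simps)
      moreover have "\<bar>N x' - N x\<bar> \<le> C * norm (x' - x)" by (rule lip)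
      moreover have "C * norm (x' - x) \<le> norm (x' - x) * (C + 1)" by (simp add: algebra_simps)
      ultimately show "dist (N x') (N x) < e" by (simp add: dist_real_def)
    qed
  qed
qed

lemma norm_lower:
  fixes N :: "'a::euclidean_space \<Rightarrow> real"
  assumes "is_norm N"
  shows "\<exists>m>0. \<forall>v. m * norm v \<le> N v"
proof -
  have "sphere (0::'a) 1 \<noteq> {}" by simp
  then obtain x0 where x0: "x0 \<in> sphere (0::'a) 1" "\<forall>y\<in>sphere 0 1. N x0 \<le> N y"
    using continuous_attains_inf[OF compact_sphere _ norm_cont[OF assms]] by blast
  have "x0 \<noteq> 0" using x0 by auto
  hence m: "N x0 > 0" using assms unfolding is_norm_def by (metis less_eq_real_def)
  show ?thesis
  proof (intro exI[of _ "N x0"] conjI allI m)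
    fix v :: 'a
    show "N x0 * norm v \<le> N v"
    proof (cases "v = 0")
      case True thus ?thesis using assms unfolding is_norm_def by simp
    next
      case False
      have "(1 / norm v) *\<^sub>R v \<in> sphere 0 1" using False by simp
      hence "N x0 \<le> N ((1 / norm v) *\<^sub>R v)" using x0 by blast
      also have "\<dots> = N v / norm v" using assms unfolding is_norm_def by simp
      finally show ?thesis using False by (simp add: field_simps)
    qed
  qed
qed

lemma lsc_min:
  fixes F :: "'a::topological_space \<Rightarrow> ereal"
  assumes "lsc_fun F" "compact C" "C \<noteq> {}"
  shows "\<exists>x\<in>C. \<forall>y\<in>C. F x \<le> F y"
proof -
  define m where "m = (INF y\<in>C. F y)"
  have "C \<inter> (\<Inter>a\<in>{a. a > m}. {x. F x \<le> a}) \<noteq> {}"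
  proof (rule compact_imp_fip_image[OF assms(2)])
    fix a show "closed {x. F x \<le> a}" using assms(1) unfolding lsc_fun_def by blast
  next
    fix I' assume I': "finite I'" "I' \<subseteq> {a. a > m}"
    show "C \<inter> (\<Inter>a\<in>I'. {x. F x \<le> a}) \<noteq> {}"
    proof (cases "I' = {}")
      case True thus ?thesis using assms(3) by simp
    next
      case False
      have "Min I' \<in> I'" using I' False by simp
      hence "m < Min I'" using I' by auto
      then obtain x where "x \<in> C" "F x < Min I'" unfolding m_def by (auto simp: INF_less_iff)
      hence "\<forall>a\<in>I'. F x \<le> a" using I' by (meson Min_le less_imp_le order_trans)
      thus ?thesis using \<open>x \<in> C\<close> by blast
    qed
  qed
  then obtain x where x: "x \<in> C" "\<And>a. a > m \<Longrightarrow> F x \<le> a" by blast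
  have "F x \<le> m"
  proof (rule ccontr)
    assume "\<not> F x \<le> m"
    hence "m < F x" by simp
    then obtain a where "m < a" "a < F x" using dense by blast
    thus False using x(2) by fastforce
  qed
  moreover have "\<forall>y\<in>C. m \<le> F y" unfolding m_def by (simp add: INF_lower)
  ultimately show ?thesis using x(1) by (meson order_trans)
qed

lemma lsc_add:
  fixes h :: "'a::topological_space \<Rightarrow> ereal"
  assumes "lsc_fun h" "continuous_on UNIV g"
  shows "lsc_fun (\<lambda>y. h y + ereal (g y))"
  unfolding lsc_fun_def
proof
  fix a :: ereal
  have "open {y. \<not> h y + ereal (g y) \<le> a}"
  proof (subst open_subopen, intro ballI)
    fix y0 assume "y0 \<in> {y. \<not> h y + ereal (g y) \<le> a}"
    hence lt: "a < h y0 + ereal (g y0)" by simp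
    show "\<exists>T. open T \<and> y0 \<in> T \<and> T \<subseteq> {y. \<not> h y + ereal (g y) \<le> a}"
    proof (cases a)
      case PInf thus ?thesis using lt by simp
    next
      case MInf
      have "h y0 \<noteq> -\<infinity>" using lt MInf by auto
      have "open {y. \<not> h y \<le> -\<infinity>}" using assms(1) unfolding lsc_fun_def
        by (intro open_Collect_neg) blast
      moreover have "{y. \<not> h y \<le> -\<infinity>} \<subseteq> {y. \<not> h y + ereal (g y) \<le> a}"
      proof
        fix y assume "y \<in> {y. \<not> h y \<le> -\<infinity>}"
        hence "h y \<noteq> -\<infinity>" by simp
        hence "h y + ereal (g y) \<noteq> -\<infinity>" by (cases "h y") auto
        thus "y \<in> {y. \<not> h y + ereal (g y) \<le> a}" using MInf by simp
      qed
      moreover have "y0 \<in> {y. \<not> h y \<le> -\<infinity>}" using \<open>h y0 \<noteq> -\<infinity>\<close> by simp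
      ultimately show ?thesis by (intro exI[of _ "{y. \<not> h y \<le> -\<infinity>}"]) simp
    next
      case (real r)
      obtain b where b: "ereal b < h y0" "b + g y0 > r"
      proof (cases "h y0")
        case (real v)
        have "r < v + g y0" using lt real \<open>a = ereal r\<close> by simp
        hence 1: "r < v - (v + g y0 - r) / 2 + g y0" by (simp add: field_simps)
        have 2: "ereal (v - (v + g y0 - r) / 2) < h y0" using real \<open>r < v + g y0\<close> by simp
        show ?thesis by (rule that[OF 2 1])
      next
        case PInf
        thus ?thesis using that[of "r - g y0 + 1"] by auto
      next
        case MInf
        thus ?thesis using lt \<open>a = ereal r\<close> by auto
      qed
      define e where "e = b + g y0 - r"
      have e: "e > 0" using b unfolding e_def by simp
      define T where "T = {y. \<not> h y \<le> ereal b} \<inter> {y. g y0 - e < g y}"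
      have "open {y. \<not> h y \<le> ereal b}" using assms(1) unfolding lsc_fun_def
        by (intro open_Collect_neg) blast
      moreover have "open {y. g y0 - e < g y}"
        by (rule open_Collect_less[OF continuous_on_const assms(2)])
      ultimately have "open T" unfolding T_def by auto
      moreover have "y0 \<in> T" unfolding T_def using b e by auto
      moreover have "T \<subseteq> {y. \<not> h y + ereal (g y) \<le> a}"
      proof
        fix y assume "y \<in> T"
        hence hb: "ereal b < h y" and gy: "g y0 - e < g y" unfolding T_def by auto
        from hb have s1: "ereal (b + g y) < h y + ereal (g y)" by (cases "h y") auto
        have "r < b + g y" using gy unfolding e_def by simp
        hence s2: "ereal r < ereal (b + g y)" by simp
        have "ereal r < h y + ereal (g y)" using s2 s1 by (rule less_trans)
        thus "y \<in> {y. \<not> h y + ereal (g y) \<le> a}" using \<open>a = ereal r\<close> by simp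
      qed
      ultimately show ?thesis by blast
    qed
  qed
  from closed_Collect_neg[OF this] show "closed {y. h y + ereal (g y) \<le> a}" by simp
qed

lemma quad_bound:
  fixes r A B :: real
  assumes "r \<ge> 0" "A \<ge> 0" "B \<ge> 0" "r\<^sup>2 \<le> A + B * r"
  shows "r \<le> B + sqrt A"
proof (rule ccontr)
  assume "\<not> r \<le> B + sqrt A"
  hence r: "r > B + sqrt A" by simp
  have "sqrt A \<ge> 0" using assms(2) by simp
  have r0: "r > 0" using r assms(3) \<open>sqrt A \<ge> 0\<close> by linarith
  have "r * (r - B) > r * sqrt A" using r r0
    by (intro mult_strict_left_mono) auto
  moreover have "r * sqrt A \<ge> sqrt A * sqrt A" using r assms(3) \<open>sqrt A \<ge> 0\<close>
    by (intro mult_right_mono) linarith+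
  moreover have "sqrt A * sqrt A = A" using assms(2) by simp
  ultimately have "r\<^sup>2 - B * r > A" by (simp add: power2_eq_square algebra_simps)
  thus False using assms(4) by simp
qed

lemma small_s:
  fixes a b C :: real
  assumes "\<And>s. 0 < s \<Longrightarrow> s < 1 \<Longrightarrow> b - s * C \<le> a" "C \<ge> 0"
  shows "b \<le> a"
proof (rule ccontr)
  assume "\<not> b \<le> a"
  hence d: "b - a > 0" by simp
  define s where "s = min (1/2) ((b - a) / (2 * C + 1))"
  have s0: "0 < s" "s < 1" unfolding s_def using d assms(2) by auto
  have "s * C \<le> (b - a) / (2 * C + 1) * C" unfolding s_def using assms(2)
    by (intro mult_right_mono) auto
  also have "\<dots> < b - a"
  proof -
    have "(b - a) / (2 * C + 1) * C = (b - a) * (C / (2 * C + 1))" by simp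
    also have "\<dots> < (b - a) * 1" using d assms(2)
      by (intro mult_strict_left_mono) (auto simp: field_simps)
    finally show ?thesis by simp
  qed
  finally have "b - s * C > a" by simp
  thus False using assms(1)[OF s0] by simp
qed

lemma norm_expand:
  fixes u d :: "'a::real_inner"
  shows "(norm (u + s *\<^sub>R d))\<^sup>2 = (norm u)\<^sup>2 + 2 * s * (u \<bullet> d) + s\<^sup>2 * (norm d)\<^sup>2"
proof -
  have "(norm (u + s *\<^sub>R d))\<^sup>2 = (u + s *\<^sub>R d) \<bullet> (u + s *\<^sub>R d)" by (rule power2_norm_eq_inner)
  also have "\<dots> = u \<bullet> u + 2 * s * (u \<bullet> d) + s\<^sup>2 * (d \<bullet> d)"
    by (simp add: inner_add_left inner_add_right inner_commute power2_eq_square algebra_simps)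
  also have "\<dots> = (norm u)\<^sup>2 + 2 * s * (u \<bullet> d) + s\<^sup>2 * (norm d)\<^sup>2"
    by (simp add: power2_norm_eq_inner)
  finally show ?thesis .
qed

lemma convex_fin:
  assumes "convex_fun h" "h x = ereal a" "h y = ereal b" "0 < t" "t < 1"
  shows "h ((1 - t) *\<^sub>R x + t *\<^sub>R y) \<le> ereal ((1 - t) * a + t * b)"
  using assms unfolding convex_fun_def by (metis times_ereal.simps(1) plus_ereal.simps(1))

lemma subdiff_fin:
  assumes "g \<in> subdiff h x" "\<forall>z. h z \<noteq> -\<infinity>"
  shows "h x = ereal (real_of_ereal (h x))" "h x < \<infinity>"
    "\<And>z. h z \<ge> h x + ereal (g \<bullet> (z - x))"
  using assms unfolding subdiff_def by (cases "h x"; auto)+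

lemma monotone_sub:
  assumes "\<forall>z. h z \<noteq> -\<infinity>" "u \<in> subdiff h a" "v \<in> subdiff h b"
  shows "(u - v) \<bullet> (a - b) \<ge> 0"
proof -
  obtain ha where ha: "h a = ereal ha" using assms(1,2) unfolding subdiff_def
    by (cases "h a") auto
  obtain hb where hb: "h b = ereal hb" using assms(1,3) unfolding subdiff_def
    by (cases "h b") auto
  have "h b \<ge> h a + ereal (u \<bullet> (b - a))" using assms(2) unfolding subdiff_def by auto
  hence 1: "hb \<ge> ha + u \<bullet> (b - a)" using ha hb by simp
  have "h a \<ge> h b + ereal (v \<bullet> (a - b))" using assms(3) unfolding subdiff_def by auto
  hence 2: "ha \<ge> hb + v \<bullet> (a - b)" using ha hb by simp
  have "u \<bullet> (b - a) = - (u \<bullet> (a - b))" by (simp add: inner_diff_right)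
  with 1 2 show ?thesis by (simp add: inner_diff_left)
qed

lemma moreau_sub:
  fixes h :: "'a::real_inner \<Rightarrow> ereal"
  assumes conv: "convex_fun h" and nm: "\<forall>z. h z \<noteq> -\<infinity>" and lam: "lam > 0"
    and hy: "h y < \<infinity>"
    and min: "\<forall>w. h y + ereal ((norm (y - x'))\<^sup>2 / (2*lam)) \<le> h w + ereal ((norm (w - x'))\<^sup>2 / (2*lam))"
  shows "(1/lam) *\<^sub>R (x' - y) \<in> subdiff h y"
proof -
  obtain ay where ay: "h y = ereal ay" using hy nm by (cases "h y") auto
  have "h w \<ge> h y + ereal (((1/lam) *\<^sub>R (x' - y)) \<bullet> (w - y))" for w
  proof (cases "h w")
    case PInf thus ?thesis by simp
  next
    case MInf thus ?thesis using nm by simp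
  next
    case (real bw)
    define I where "I = (y - x') \<bullet> (w - y)"
    define Dn where "Dn = (norm (w - y))\<^sup>2"
    define Q0 where "Q0 = (norm (y - x'))\<^sup>2"
    have cI: "((1/lam) *\<^sub>R (x' - y)) \<bullet> (w - y) = - I / lam"
      unfolding I_def by (simp add: inner_diff_left)
    have key: "ay + (- I / lam) - s * (Dn / (2*lam)) \<le> bw" if s: "0 < s" "s < 1" for s
    proof -
      define ws where "ws = (1 - s) *\<^sub>R y + s *\<^sub>R w"
      have ws': "ws - x' = (y - x') + s *\<^sub>R (w - y)" unfolding ws_def by (simp add: algebra_simps)
      have hws: "h ws \<le> ereal ((1 - s) * ay + s * bw)" unfolding ws_def
        by (rule convex_fin[OF conv ay real s])
      have "ereal (ay + Q0/(2*lam)) \<le> h ws + ereal ((norm (ws - x'))\<^sup>2 / (2*lam))"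
        using min[rule_format, of ws] ay unfolding Q0_def by simp
      also have "\<dots> \<le> ereal ((1 - s) * ay + s * bw) + ereal ((norm (ws - x'))\<^sup>2 / (2*lam))"
        using hws by (rule add_right_mono)
      finally have 1: "ay + Q0/(2*lam) \<le> (1 - s) * ay + s * bw + (norm (ws - x'))\<^sup>2 / (2*lam)"
        by simp
      have 2: "(norm (ws - x'))\<^sup>2 = Q0 + 2 * s * I + s\<^sup>2 * Dn"
        unfolding ws' Q0_def I_def Dn_def by (rule norm_expand)
      have 3: "(Q0 + 2 * s * I + s\<^sup>2 * Dn) / (2*lam) = Q0/(2*lam) + s * (I/lam + s * (Dn/(2*lam)))"
        using lam by (simp add: field_simps power2_eq_square)
      have "ay + Q0/(2*lam) \<le> ay - s * ay + s * bw + (Q0/(2*lam) + s * (I/lam + s * (Dn/(2*lam))))"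
        using 1 unfolding 2 3 by (simp add: algebra_simps)
      hence "s * ay \<le> s * (bw + (I/lam + s * (Dn/(2*lam))))" by (simp add: algebra_simps)
      hence "ay \<le> bw + (I/lam + s * (Dn/(2*lam)))" using s(1) by (rule mult_left_le_imp_le)
      thus ?thesis by simp
    qed
    have "ay + (- I / lam) \<le> bw"
      by (rule small_s[OF key]) (use lam in \<open>auto simp: Dn_def\<close>)
    thus ?thesis using ay real cI by simp
  qed
  thus ?thesis unfolding subdiff_def using hy by auto
qed

lemma moreau:
  fixes h :: "'a::euclidean_space \<Rightarrow> ereal"
  assumes conv: "convex_fun h" and lsc: "lsc_fun h" and nm: "\<forall>z. h z \<noteq> -\<infinity>"
    and b: "b \<in> subdiff h p0" and hx: "h x' < \<infinity>" and lam: "lam > 0"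
  shows "\<exists>y. (1/lam) *\<^sub>R (x' - y) \<in> subdiff h y \<and> real_of_ereal (h y) \<le> real_of_ereal (h x') \<and>
     norm (y - x') \<le> 2*lam*norm b + sqrt (2*lam*(real_of_ereal (h x') - real_of_ereal (h p0) - b \<bullet> (x' - p0)))"
proof -
  obtain ax where ax: "h x' = ereal ax" using hx nm by (cases "h x'") auto
  obtain a0 where a0: "h p0 = ereal a0" using b nm unfolding subdiff_def by (cases "h p0") auto
  have "h x' \<ge> h p0 + ereal (b \<bullet> (x' - p0))" using b unfolding subdiff_def by auto
  hence A0: "ax - a0 - b \<bullet> (x' - p0) \<ge> 0" using ax a0 by simp
  define A' where "A' = ax - a0 - b \<bullet> (x' - p0)"
  define R0 where "R0 = 2*lam*norm b + sqrt (2*lam*A')"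
  define F where "F w = h w + ereal ((norm (w - x'))\<^sup>2 / (2*lam))" for w
  have lscF: "lsc_fun F" unfolding F_def
    by (rule lsc_add[OF lsc]) (use lam in \<open>intro continuous_intros; auto\<close>)
  have Fx: "F x' = ereal ax" unfolding F_def using ax by simp
  have inC: "w \<in> cball x' R0" if Fw: "F w \<le> F x'" for w
  proof -
    have "h w \<noteq> \<infinity>" using Fw Fx unfolding F_def by auto
    then obtain aw where aw: "h w = ereal aw" using nm by (cases "h w") auto
    define r where "r = norm (w - x')"
    have 1: "aw + r\<^sup>2 / (2*lam) \<le> ax" using Fw Fx aw unfolding F_def r_def by simp
    have "h w \<ge> h p0 + ereal (b \<bullet> (w - p0))" using b unfolding subdiff_def by auto
    hence 2: "aw \<ge> a0 + b \<bullet> (w - p0)" using aw a0 by simp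
    have 3: "b \<bullet> (w - p0) = b \<bullet> (x' - p0) - b \<bullet> (x' - w)" by (simp add: inner_diff_right)
    have 4: "b \<bullet> (x' - w) \<le> norm b * r" unfolding r_def
      using norm_cauchy_schwarz[of b "x' - w"] by (simp add: norm_minus_commute)
    have "r\<^sup>2 / (2*lam) \<le> A' + norm b * r" using 1 2 3 4 unfolding A'_def by linarith
    hence "r\<^sup>2 \<le> 2*lam*A' + 2*lam*norm b * r" using lam by (simp add: field_simps)
    hence "r \<le> 2*lam*norm b + sqrt (2*lam*A')"
      using quad_bound[of r "2*lam*A'" "2*lam*norm b"] lam A0 unfolding r_def A'_def by auto
    thus ?thesis unfolding R0_def r_def by (simp add: dist_norm norm_minus_commute)
  qed
  have R0: "R0 \<ge> 0" unfolding R0_def using lam A0 A'_def by simp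
  obtain y where y: "y \<in> cball x' R0" "\<forall>z\<in>cball x' R0. F y \<le> F z"
    using lsc_min[OF lscF compact_cball, of x' R0] R0 by auto
  have glob: "\<forall>w. F y \<le> F w"
  proof
    fix w show "F y \<le> F w"
    proof (cases "w \<in> cball x' R0")
      case True thus ?thesis using y by blast
    next
      case False
      hence "\<not> F w \<le> F x'" using inC by blast
      moreover have "F y \<le> F x'" using y R0 by simp
      ultimately show ?thesis by simp
    qed
  qed
  have Fyx: "F y \<le> F x'" using glob by blast
  have hy: "h y < \<infinity>" using Fyx Fx unfolding F_def by auto
  then obtain ay where ay: "h y = ereal ay" using nm by (cases "h y") auto
  have sub: "(1/lam) *\<^sub>R (x' - y) \<in> subdiff h y"
    by (rule moreau_sub[OF conv nm lam hy]) (use glob in \<open>simp add: F_def\<close>)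
  have "ay + (norm (y - x'))\<^sup>2 / (2*lam) \<le> ax" using Fyx Fx ay unfolding F_def by simp
  moreover have "(norm (y - x'))\<^sup>2 / (2*lam) \<ge> 0" using lam by simp
  ultimately have le: "real_of_ereal (h y) \<le> real_of_ereal (h x')" using ay ax by simp
  have "norm (y - x') \<le> R0" using y(1) by (simp add: dist_norm norm_minus_commute)
  thus ?thesis using sub le unfolding R0_def A'_def ax a0 by auto
qed

lemma directional:
  fixes h :: "'a::euclidean_space \<Rightarrow> ereal"
  assumes conv: "convex_fun h" and lsc: "lsc_fun h" and nm: "\<forall>z. h z \<noteq> -\<infinity>"
    and sel: "\<forall>x\<in>dom_subdiff h. gh x \<in> subdiff h x"
    and cont: "continuous_on (dom_subdiff h) gh"
    and p: "p \<in> dom_subdiff h" and c: "c \<in> subdiff h p" and hq: "h q < \<infinity>"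
  shows "(gh p - c) \<bullet> (q - p) \<ge> 0"
proof -
  obtain ap where ap: "h p = ereal ap" using c nm unfolding subdiff_def by (cases "h p") auto
  obtain aq where aq: "h q = ereal aq" using hq nm by (cases "h q") auto
  define d where "d = q - p"
  define M where "M = aq - ap - c \<bullet> d"
  have "h q \<ge> h p + ereal (c \<bullet> (q - p))" using c unfolding subdiff_def by auto
  hence M0: "M \<ge> 0" using ap aq unfolding M_def d_def by simp
  define K1 where "K1 = 2 * norm c + sqrt (2 * M)"
  have K1: "K1 \<ge> 0" unfolding K1_def using M0 by simp
  have ex: "\<exists>y. y \<in> dom_subdiff h \<and> norm (y - (p + s *\<^sub>R d)) \<le> s\<^sup>2 * K1"
    if s: "0 < s" "s < 1" for s
  proof -
    define z where "z = p + s *\<^sub>R d"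
    have z': "z = (1 - s) *\<^sub>R p + s *\<^sub>R q" unfolding z_def d_def by (simp add: algebra_simps)
    have hz: "h z \<le> ereal ((1 - s) * ap + s * aq)" unfolding z' by (rule convex_fin[OF conv ap aq s])
    hence "h z < \<infinity>" by (cases "h z") auto
    then obtain az where az: "h z = ereal az" using nm by (cases "h z") auto
    have az1: "az \<le> (1 - s) * ap + s * aq" using hz az by simp
    have s3: "s ^ 3 > 0" using s by simp
    obtain y where y: "(1 / s ^ 3) *\<^sub>R (z - y) \<in> subdiff h y"
      "norm (y - z) \<le> 2 * s ^ 3 * norm c + sqrt (2 * s ^ 3 * (real_of_ereal (h z) - real_of_ereal (h p) - c \<bullet> (z - p)))"
      using moreau[OF conv lsc nm c \<open>h z < \<infinity>\<close> s3] by blast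
    have yD: "y \<in> dom_subdiff h" using y(1) unfolding dom_subdiff_def by blast
    have "c \<bullet> (z - p) = s * (c \<bullet> d)" unfolding z_def by simp
    hence A: "real_of_ereal (h z) - real_of_ereal (h p) - c \<bullet> (z - p) \<le> s * M"
      using az ap az1 unfolding M_def by (simp add: algebra_simps)
    have "2 * s ^ 3 * (real_of_ereal (h z) - real_of_ereal (h p) - c \<bullet> (z - p)) \<le> 2 * s ^ 3 * (s*M)"
      using A s3 by (intro mult_left_mono) auto
    hence "sqrt (2 * s ^ 3 * (real_of_ereal (h z) - real_of_ereal (h p) - c \<bullet> (z - p))) \<le> sqrt ((s\<^sup>2)\<^sup>2 * (2*M))"
      by (simp add: power2_eq_square power3_eq_cube algebra_simps)
    also have "\<dots> = sqrt ((s\<^sup>2)\<^sup>2) * sqrt (2*M)" by (rule real_sqrt_mult)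
    also have "\<dots> = s\<^sup>2 * sqrt (2*M)" unfolding real_sqrt_abs by simp
    finally have 1: "sqrt (2 * s ^ 3 * (real_of_ereal (h z) - real_of_ereal (h p) - c \<bullet> (z - p))) \<le> s\<^sup>2 * sqrt (2*M)" .
    have "s ^ 3 \<le> s\<^sup>2" using s by (simp add: power3_eq_cube power2_eq_square)
    hence 2: "2 * s ^ 3 * norm c \<le> 2 * s\<^sup>2 * norm c" by (simp add: mult_right_mono)
    have "norm (y - z) \<le> s\<^sup>2 * K1" using y(2) 1 2 unfolding K1_def by (simp add: algebra_simps)
    thus ?thesis using yD unfolding z_def by blast
  qed
  obtain Y where Y: "\<And>s. 0 < s \<Longrightarrow> s < 1 \<Longrightarrow> Y s \<in> dom_subdiff h \<and> norm (Y s - (p + s *\<^sub>R d)) \<le> s\<^sup>2 * K1"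
    using ex by metis
  define e where "e s = (1/s) *\<^sub>R (Y s - (p + s *\<^sub>R d))" for s
  have ev01: "eventually (\<lambda>s. 0 < s \<and> s < (1::real)) (at_right 0)"
    unfolding eventually_at_right_field by (intro exI[of _ 1]) auto
  have "eventually (\<lambda>s. norm (e s) \<le> s * K1) (at_right 0)"
    using ev01
  proof (rule eventually_mono)
    fix s :: real assume s: "0 < s \<and> s < 1"
    have "norm (e s) = norm (Y s - (p + s *\<^sub>R d)) / s" unfolding e_def using s by simp
    also have "\<dots> \<le> s\<^sup>2 * K1 / s" using Y[of s] s by (intro divide_right_mono) auto
    also have "\<dots> = s * K1" using s by (simp add: power2_eq_square)
    finally show "norm (e s) \<le> s * K1" .
  qed
  moreover have "((\<lambda>s. s * K1) \<longlongrightarrow> 0) (at_right (0::real))"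
  proof -
    have "((\<lambda>s. s * K1) \<longlongrightarrow> 0 * K1) (at_right (0::real))"
      by (intro tendsto_intros)
    thus ?thesis by simp
  qed
  ultimately have e0: "(e \<longlongrightarrow> 0) (at_right 0)" by (rule Lim_null_comparison)
  have Yeq: "eventually (\<lambda>s. p + s *\<^sub>R (d + e s) = Y s) (at_right 0)"
    using ev01 by (rule eventually_mono) (simp add: e_def algebra_simps)
  have "((\<lambda>s. p + s *\<^sub>R (d + e s)) \<longlongrightarrow> p + 0 *\<^sub>R (d + 0)) (at_right 0)"
    by (intro tendsto_intros e0)
  hence Yt: "(Y \<longlongrightarrow> p) (at_right 0)" using Yeq by (simp add: tendsto_cong)
  have evD: "eventually (\<lambda>s. Y s \<in> dom_subdiff h) (at_right 0)"
    using ev01 by (rule eventually_mono) (use Y in blast)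
  have ghY: "((\<lambda>s. gh (Y s)) \<longlongrightarrow> gh p) (at_right 0)"
    by (rule continuous_on_tendsto_compose[OF cont Yt p evD])
  have lim: "((\<lambda>s. (gh (Y s) - c) \<bullet> (d + e s)) \<longlongrightarrow> (gh p - c) \<bullet> (d + 0)) (at_right 0)"
    by (intro tendsto_intros ghY e0)
  have evpos: "eventually (\<lambda>s. 0 \<le> (gh (Y s) - c) \<bullet> (d + e s)) (at_right 0)"
    using ev01
  proof (rule eventually_mono)
    fix s :: real assume s: "0 < s \<and> s < 1"
    have YD: "Y s \<in> dom_subdiff h" using Y s by blast
    have "0 \<le> (gh (Y s) - c) \<bullet> (Y s - p)"
      by (rule monotone_sub[OF nm]) (use sel YD c in auto)
    also have "Y s - p = s *\<^sub>R (d + e s)" using s by (simp add: e_def algebra_simps)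
    finally have "0 \<le> s * ((gh (Y s) - c) \<bullet> (d + e s))" by simp
    thus "0 \<le> (gh (Y s) - c) \<bullet> (d + e s)" using s by (simp add: zero_le_mult_iff)
  qed
  have "0 \<le> (gh p - c) \<bullet> (d + 0)"
    by (rule tendsto_lowerbound[OF lim evpos]) simp
  thus ?thesis unfolding d_def by simp
qed

lemma min_sub:
  fixes h :: "'a::real_inner \<Rightarrow> ereal"
  assumes nm: "\<forall>z. h z \<noteq> -\<infinity>" and hp: "h p < \<infinity>"
    and glob: "\<forall>w. h p + ereal (- (c \<bullet> p)) \<le> h w + ereal (- (c \<bullet> w))"
  shows "c \<in> subdiff h p"
proof -
  obtain ap where ap: "h p = ereal ap" using hp nm by (cases "h p") auto
  have "h w \<ge> h p + ereal (c \<bullet> (w - p))" for w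
  proof (cases "h w")
    case (real aw)
    have "ap - c \<bullet> p \<le> aw - c \<bullet> w" using glob[rule_format, of w] ap real by simp
    thus ?thesis using ap real by (simp add: inner_diff_right)
  qed (use nm in auto)
  thus ?thesis unfolding subdiff_def using hp by auto
qed

lemma breg_eq:
  assumes "h z = ereal az" "h q = ereal aq"
  shows "ereal (yv \<bullet> (q - z)) + breg h gh z q = ereal (az - (gh q + yv) \<bullet> z + (yv \<bullet> q - aq + gh q \<bullet> q))"
  using assms unfolding breg_def by (simp add: inner_diff_right inner_add_left algebra_simps)

lemma prox_step:
  fixes N :: "'a::euclidean_space \<Rightarrow> real" and h :: "'a \<Rightarrow> ereal"
  assumes nN: "is_norm N" and br: "bregman_function N X h gh" and q: "q \<in> dom_subdiff h"
  shows "prox X h gh q yv \<in> dom_subdiff h \<and> (gh q + yv) \<in> subdiff h (prox X h gh q yv) \<and>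
    (gh (prox X h gh q yv) - (gh q + yv)) \<bullet> (q - prox X h gh q yv) \<ge> 0"
proof -
  define c where "c = gh q + yv"
  have conv: "convex_fun h" and lsc: "lsc_fun h" and nm: "\<forall>x. h x \<noteq> -\<infinity>"
    and DX: "dom_subdiff h \<subseteq> X" and Xd: "X \<subseteq> edom h"
    and sel: "\<forall>x\<in>dom_subdiff h. gh x \<in> subdiff h x"
    and cont: "continuous_on (dom_subdiff h) gh"
    using br unfolding bregman_function_def by auto
  obtain K where K: "K > 0" and strong: "\<forall>x\<in>dom_subdiff h. \<forall>x'\<in>dom_subdiff h.
        h x' \<ge> h x + ereal (gh x \<bullet> (x' - x)) + ereal (K / 2 * (N (x' - x))\<^sup>2)"
    using br unfolding bregman_function_def by auto
  obtain m where m: "m > 0" "\<forall>v. m * norm v \<le> N v" using norm_lower[OF nN] by blast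
  define b0 where "b0 = gh q"
  have b0: "b0 \<in> subdiff h q" using sel q unfolding b0_def by blast
  obtain aq where aq: "h q = ereal aq" using b0 nm unfolding subdiff_def by (cases "h q") auto
  define F where "F w = h w + ereal (- (c \<bullet> w))" for w
  have lscF: "lsc_fun F" unfolding F_def
    by (rule lsc_add[OF lsc]) (intro continuous_intros)
  define Kp where "Kp = K * m\<^sup>2 / 2"
  have Kp: "Kp > 0" unfolding Kp_def using K m by simp
  define B where "B = norm (b0 - c)"
  define nc where "nc = norm c"
  define R where "R = 2 + (B + nc) / Kp"
  have Fq: "F q = ereal (aq - c \<bullet> q)" unfolding F_def using aq by simp
  have coer: "F q < F w" if w: "norm (w - q) > R" for w
  proof (cases "h w")
    case PInf thus ?thesis using Fq unfolding F_def by simp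
  next
    case MInf thus ?thesis using nm by simp
  next
    case (real aw)
    define A' where "A' = aw - aq - b0 \<bullet> (w - q)"
    have "h w \<ge> h q + ereal (b0 \<bullet> (w - q))" using b0 unfolding subdiff_def by auto
    hence A0: "A' \<ge> 0" using aq real unfolding A'_def by simp
    define lam where "lam = 1 / (4 * norm b0 + 8 * A' + 1)"
    have pos: "4 * norm b0 + 8 * A' + 1 > 0" using A0 norm_ge_zero[of b0] by linarith
    have lam0: "lam > 0" unfolding lam_def using pos by simp
    have lamE: "lam * (4 * norm b0 + 8 * A' + 1) = 1" unfolding lam_def using pos by simp
    obtain y where y: "(1/lam) *\<^sub>R (w - y) \<in> subdiff h y" "real_of_ereal (h y) \<le> real_of_ereal (h w)"
      "norm (y - w) \<le> 2*lam*norm b0 + sqrt (2*lam*(real_of_ereal (h w) - real_of_ereal (h q) - b0 \<bullet> (w - q)))"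
      using moreau[OF conv lsc nm b0 _ lam0, of w] real by auto
    have yD: "y \<in> dom_subdiff h" using y(1) unfolding dom_subdiff_def by blast
    obtain ay where ay: "h y = ereal ay" using y(1) nm unfolding subdiff_def by (cases "h y") auto
    have ayw: "ay \<le> aw" using y(2) ay real by simp
    have t1: "2*lam*norm b0 \<le> 1/2"
    proof -
      have "lam * (4 * norm b0) \<le> 1" using lamE lam0 A0
        by (smt (verit) mult_nonneg_nonneg distrib_left)
      thus ?thesis by simp
    qed
    have "lam * (8 * A') \<le> 1" using lamE lam0 A0
      by (smt (verit) mult_nonneg_nonneg distrib_left norm_ge_zero)
    hence "2*lam*A' \<le> (1/2)\<^sup>2" by (simp add: power2_eq_square)
    hence t2: "sqrt (2*lam*A') \<le> 1/2" using real_sqrt_le_mono by fastforce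
    have ny: "norm (y - w) \<le> 1" using y(3) t1 t2 aq real unfolding A'_def by simp
    define \<rho> where "\<rho> = norm (y - q)"
    have "norm (w - q) \<le> norm (y - w) + \<rho>" unfolding \<rho>_def
      using norm_triangle_ineq[of "w - y" "y - q"] by (simp add: norm_minus_commute)
    hence rho: "\<rho> > 1 + (B + nc) / Kp" using w ny unfolding R_def by simp
    have "h y \<ge> h q + ereal (gh q \<bullet> (y - q)) + ereal (K / 2 * (N (y - q))\<^sup>2)"
      using strong q yD by blast
    hence s1: "ay \<ge> aq + b0 \<bullet> (y - q) + K / 2 * (N (y - q))\<^sup>2" using ay aq unfolding b0_def by simp
    have "m * \<rho> \<le> N (y - q)" using m unfolding \<rho>_def by blast
    hence "(m * \<rho>)\<^sup>2 \<le> (N (y - q))\<^sup>2" using m by (intro power_mono) (auto simp: \<rho>_def)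
    hence "Kp * \<rho>\<^sup>2 \<le> K / 2 * (N (y - q))\<^sup>2" unfolding Kp_def using K
      by (simp add: power_mult_distrib)
    with s1 have s2: "ay \<ge> aq + b0 \<bullet> (y - q) + Kp * \<rho>\<^sup>2" by linarith
    have "c \<bullet> (w - y) \<le> nc * norm (w - y)" unfolding nc_def by (rule norm_cauchy_schwarz)
    also have "\<dots> \<le> nc" using ny unfolding nc_def by (simp add: norm_minus_commute mult_left_le)
    finally have s3: "c \<bullet> (w - y) \<le> nc" .
    have "(b0 - c) \<bullet> (y - q) \<ge> - (B * \<rho>)" unfolding B_def \<rho>_def
      using norm_cauchy_schwarz[of "c - b0" "y - q"] by (simp add: norm_minus_commute inner_diff_left)
    have "aw - c \<bullet> w - (aq - c \<bullet> q) \<ge> (b0 - c) \<bullet> (y - q) + Kp * \<rho>\<^sup>2 - nc"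
      using s2 s3 ayw by (simp add: inner_diff_left inner_diff_right algebra_simps)
    moreover have "Kp * \<rho>\<^sup>2 - B * \<rho> - nc > 0"
    proof -
      have r1: "\<rho> > 1" using rho Kp unfolding B_def nc_def
        by (smt (verit) divide_nonneg_pos norm_ge_zero)
      have e1: "Kp * (1 + (B + nc) / Kp) = Kp + B + nc" using Kp by (simp add: field_simps)
      have "Kp * (1 + (B + nc) / Kp) < Kp * \<rho>" using rho Kp by simp
      hence "Kp * \<rho> - B > nc" using e1 Kp by linarith
      moreover have "nc \<ge> 0" unfolding nc_def by simp
      ultimately have X0: "Kp * \<rho> - B > 0" by linarith
      have "\<rho> * (Kp * \<rho> - B) > 1 * (Kp * \<rho> - B)" by (rule mult_strict_right_mono[OF r1 X0])
      hence "Kp * \<rho> - B < \<rho> * (Kp * \<rho> - B)" by simp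
      hence "\<rho> * (Kp * \<rho> - B) > nc" using \<open>Kp * \<rho> - B > nc\<close> by (meson less_trans)
      thus ?thesis by (simp add: power2_eq_square algebra_simps)
    qed
    ultimately have "aw - c \<bullet> w > aq - c \<bullet> q"
      using \<open>(b0 - c) \<bullet> (y - q) \<ge> - (B * \<rho>)\<close> by linarith
    thus ?thesis using Fq real unfolding F_def by simp
  qed
  have R0: "R \<ge> 0" unfolding R_def using Kp B_def nc_def by simp
  obtain ps where ps: "ps \<in> cball q R" "\<forall>z\<in>cball q R. F ps \<le> F z"
    using lsc_min[OF lscF compact_cball, of q R] R0 by auto
  have Fpsq: "F ps \<le> F q" using ps R0 by simp
  have globps: "\<forall>w. F ps \<le> F w"
  proof
    fix w show "F ps \<le> F w"
    proof (cases "w \<in> cball q R")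
      case True thus ?thesis using ps by blast
    next
      case False
      hence "norm (w - q) > R" by (simp add: dist_norm norm_minus_commute)
      thus ?thesis using coer Fpsq by (meson less_imp_le order_trans)
    qed
  qed
  have hps: "h ps < \<infinity>" using Fpsq Fq unfolding F_def by auto
  have cps: "c \<in> subdiff h ps" by (rule min_sub[OF nm hps]) (use globps in \<open>simp add: F_def\<close>)
  have psD: "ps \<in> dom_subdiff h" using cps unfolding dom_subdiff_def by blast
  define Pr where "Pr x' = (x' \<in> X \<and> (\<forall>z\<in>X. ereal (yv \<bullet> (q - x')) + breg h gh x' q \<le> ereal (yv \<bullet> (q - z)) + breg h gh z q))" for x'
  have fin: "\<exists>a. h z = ereal a" if "z \<in> X" for z
    using that Xd nm unfolding edom_def by (cases "h z") auto
  have Feq: "ereal (yv \<bullet> (q - z)) + breg h gh z q = F z + ereal (yv \<bullet> q - aq + gh q \<bullet> q)" if zX: "z \<in> X" for z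
  proof -
    obtain az where az: "h z = ereal az" using fin[OF zX] by blast
    show ?thesis unfolding breg_eq[OF az aq] F_def c_def az by simp
  qed
  have "Pr ps" unfolding Pr_def
  proof (intro conjI ballI)
    show "ps \<in> X" using psD DX by blast
    fix z assume z: "z \<in> X"
    show "ereal (yv \<bullet> (q - ps)) + breg h gh ps q \<le> ereal (yv \<bullet> (q - z)) + breg h gh z q"
      unfolding Feq[OF z] Feq[OF \<open>ps \<in> X\<close>] using globps by (simp add: add_right_mono)
  qed
  hence Pp: "Pr (prox X h gh q yv)" unfolding prox_def Pr_def[abs_def] by (rule someI)
  define p where "p = prox X h gh q yv"
  have pX: "p \<in> X" using Pp unfolding Pr_def p_def by blast
  have psX: "ps \<in> X" using psD DX by blast
  have "ereal (yv \<bullet> (q - p)) + breg h gh p q \<le> ereal (yv \<bullet> (q - ps)) + breg h gh ps q"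
    using Pp psX unfolding Pr_def p_def by blast
  hence "F p + ereal (yv \<bullet> q - aq + gh q \<bullet> q) \<le> F ps + ereal (yv \<bullet> q - aq + gh q \<bullet> q)"
    unfolding Feq[OF pX] Feq[OF psX] .
  hence Fpps: "F p \<le> F ps" by (simp add: ereal_add_le_add_iff2)
  have globp: "\<forall>w. F p \<le> F w" using Fpps globps by (meson order_trans)
  have hp: "h p < \<infinity>" using fin[OF pX] by auto
  have cp: "c \<in> subdiff h p" by (rule min_sub[OF nm hp]) (use globp in \<open>simp add: F_def\<close>)
  have pD: "p \<in> dom_subdiff h" using cp unfolding dom_subdiff_def by blast
  have hq: "h q < \<infinity>" using aq by simp
  have dir: "(gh p - c) \<bullet> (q - p) \<ge> 0" by (rule directional[OF conv lsc nm sel cont pD cp hq])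
  show ?thesis using pD cp dir unfolding p_def c_def by blast
qed



lemma final_ineq:
  fixes S gam G Dpq gx :: real
  assumes "S \<ge> 0" "Dpq \<le> S" "Dpq \<ge> 0" "S \<le> gam * gx" "gx \<le> G * sqrt (2 * Dpq)" "gam > 0" "G > 0"
  shows "(sqrt S / gam)\<^sup>2 \<le> 2 * G\<^sup>2"
proof -
  have "gam * gx \<le> gam * (G * sqrt (2 * Dpq))" using assms by (intro mult_left_mono) auto
  also have "\<dots> \<le> gam * (G * sqrt (2 * S))" using assms
    by (intro mult_left_mono) (auto intro: real_sqrt_le_mono)
  finally have 1: "S \<le> gam * G * sqrt (2 * S)" using assms(4) by (simp add: mult.assoc)
  have "S \<le> 2 * gam\<^sup>2 * G\<^sup>2"
  proof (cases "S = 0")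
    case True thus ?thesis by simp
  next
    case False
    hence S0: "S > 0" using assms(1) by simp
    have "S\<^sup>2 \<le> (gam * G * sqrt (2 * S))\<^sup>2" using 1 S0 by (intro power_mono) auto
    also have "\<dots> = gam\<^sup>2 * G\<^sup>2 * (2 * S)" using S0 by (simp add: power_mult_distrib)
    finally have "S * S \<le> (2 * gam\<^sup>2 * G\<^sup>2) * S" by (simp add: power2_eq_square algebra_simps)
    thus ?thesis using S0 by simp
  qed
  thus ?thesis using assms(1,6) by (simp add: power_divide field_simps)
qed

theorem lemma1:
  fixes N :: "'a::euclidean_space \<Rightarrow> real"
    and X :: "'a set"
    and f h :: "'a \<Rightarrow> ereal"
    and gf gh :: "'a \<Rightarrow> 'a"
    and G :: real
    and x :: "nat \<Rightarrow> 'a"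
    and gam del :: "nat \<Rightarrow> real"
  assumes "is_norm N"
    and "convex X"
    and "proper_fun f" and "lsc_fun f" and "convex_fun f"
    and "edom f = X"
    and "\<exists>xs. \<forall>z. f xs \<le> f z"
    and "\<forall>z\<in>dom_subdiff f. gf z \<in> subdiff f z"
    and "bregman_function N X h gh"
    and "G > 0"
    and "rel_continuous f gf h gh G"
    and "x 0 \<in> dom_subdiff h" and "x 1 \<in> dom_subdiff h" and "x 0 \<noteq> x 1"
    and "del 0 = sqrt (real_of_ereal (breg h gh (x 0) (x 1) + breg h gh (x 1) (x 0)))"
    and "\<forall>t\<ge>1. gam t = 1 / sqrt (\<Sum>s<t. (del s)\<^sup>2)"
    and "\<forall>t\<ge>1. x (t + 1) = prox X h gh (x t) (- (gam t *\<^sub>R gf (x t)))"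
    and "\<forall>t\<ge>1. del t = sqrt (real_of_ereal (breg h gh (x t) (x (t + 1)) + breg h gh (x (t + 1)) (x t))) / gam t"
  shows "\<forall>t\<ge>1. (del t)\<^sup>2 \<le> 2 * G\<^sup>2"
proof -
  note nN = assms(1) and br = assms(9) and G0 = assms(10) and rc = assms(11)
  note gamd = assms(16) and xd = assms(17) and deld = assms(18)
  have nm: "\<forall>x. h x \<noteq> -\<infinity>" and DX: "dom_subdiff h \<subseteq> X" and Xd: "X \<subseteq> edom h"
    and sel: "\<forall>x\<in>dom_subdiff h. gh x \<in> subdiff h x"
    using br unfolding bregman_function_def by auto
  have dom: "x (n + 1) \<in> dom_subdiff h" for n
  proof (induction n)
    case 0 thus ?case using assms(13) by simp
  next
    case (Suc n)
    have "x (Suc n + 1) = prox X h gh (x (n + 1)) (- (gam (n + 1) *\<^sub>R gf (x (n + 1))))"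
      using xd[rule_format, of "n + 1"] by simp
    thus ?case using prox_step[OF nN br Suc.IH] by simp
  qed
  show ?thesis
  proof (intro allI impI)
    fix t :: nat assume t: "t \<ge> 1"
    define q where "q = x t"
    define g where "g = gf q"
    define \<gamma> where "\<gamma> = gam t"
    define p where "p = x (t + 1)"
    have qD: "q \<in> dom_subdiff h" unfolding q_def using dom[of "t - 1"] t by simp
    have pe: "p = prox X h gh q (- (\<gamma> *\<^sub>R g))" unfolding p_def q_def \<gamma>_def g_def using xd t by simp
    define c where "c = gh q + (- (\<gamma> *\<^sub>R g))"
    have ps: "p \<in> dom_subdiff h" "c \<in> subdiff h p" "(gh p - c) \<bullet> (q - p) \<ge> 0"
      using prox_step[OF nN br qD, of "- (\<gamma> *\<^sub>R g)"] unfolding pe[symmetric] c_def by auto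
    have sq: "gh q \<in> subdiff h q" using sel qD by blast
    have sp: "gh p \<in> subdiff h p" using sel ps(1) by blast
    obtain aq where aq: "h q = ereal aq" using sq nm unfolding subdiff_def by (cases "h q") auto
    obtain ap where ap: "h p = ereal ap" using sp nm unfolding subdiff_def by (cases "h p") auto
    define Dqp where "Dqp = aq - ap - gh p \<bullet> (q - p)"
    define Dpq where "Dpq = ap - aq - gh q \<bullet> (p - q)"
    have bqp: "breg h gh q p = ereal Dqp" unfolding breg_def Dqp_def using aq ap by simp
    have bpq: "breg h gh p q = ereal Dpq" unfolding breg_def Dpq_def using aq ap by simp
    have "h q \<ge> h p + ereal (gh p \<bullet> (q - p))" using sp unfolding subdiff_def by auto
    hence Dqp0: "Dqp \<ge> 0" unfolding Dqp_def using aq ap by simp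
    have "h p \<ge> h q + ereal (gh q \<bullet> (p - q))" using sq unfolding subdiff_def by auto
    hence Dpq0: "Dpq \<ge> 0" unfolding Dpq_def using aq ap by simp
    define S where "S = Dqp + Dpq"
    have "del t = sqrt (real_of_ereal (breg h gh q p + breg h gh p q)) / \<gamma>"
      using deld t unfolding q_def p_def \<gamma>_def by simp
    hence delt: "del t = sqrt S / \<gamma>" unfolding bqp bpq S_def by simp
    have "S = (gh q - gh p) \<bullet> (q - p)" unfolding S_def Dqp_def Dpq_def
      by (simp add: inner_diff_left inner_diff_right algebra_simps)
    hence SleG: "S \<le> \<gamma> * (g \<bullet> (q - p))" using ps(3) unfolding c_def
      by (simp add: inner_diff_left inner_add_left algebra_simps)
    have pdom: "p \<in> edom h" using ps(1) DX Xd by blast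
    have "g \<bullet> (q - p) \<le> G * sqrt (2 * real_of_ereal (breg h gh p q))"
      using rc qD pdom unfolding rel_continuous_def g_def by blast
    hence rel: "g \<bullet> (q - p) \<le> G * sqrt (2 * Dpq)" unfolding bpq by simp
    have g0: "\<gamma> \<ge> 0" unfolding \<gamma>_def using gamd t
      by (simp add: sum_nonneg)
    show "(del t)\<^sup>2 \<le> 2 * G\<^sup>2"
    proof (cases "\<gamma> = 0")
      case True thus ?thesis using delt by simp
    next
      case False
      hence "\<gamma> > 0" using g0 by simp
      thus ?thesis unfolding delt
        by (intro final_ineq[OF _ _ Dpq0 SleG rel _ G0]) (auto simp: S_def Dqp0 Dpq0)
    qed
  qed
qed

end
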